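(* Let $P=(p_1,\dots,p_S)$ be a fixed probability distribution on $\{1,\dots,S\}$, let $\hat P_n=(N_1/n,\dots,N_S/n)$ be the empirical distribution of $n$ i.i.d. samples from $P$, where $N_k$ is the number of samples equal to $k$. Then, as $n\to\infty$, $$\mathbb E\big[(Q(P)-Q(\hat P_n))^2\big]=\mathcal O\Big(\frac{\log^4 n}{n}\Big).$$
   Context: For a probability vector $P=(p_1,\dots,p_S)$, $Q(P)=\sum_{k=1}^S p_k\log^2(p_k)$, with the convention $0\log^2 0=0$. *)

theory Defs
  imports Complex_Main "HOL-Library.FuncSet" "HOL-Library.Landau_Symbols"
begin

text \<open>Q(P) = sum_{k=1}^S p_k log^2 p_k (natural log; 0 log^2 0 = 0 since 0 * _ = 0).\<close>
definition Qfun :: "nat \<Rightarrow> (nat \<Rightarrow> real) \<Rightarrow> real" where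
  "Qfun S p = (\<Sum>k\<in>{1..S}. p k * (ln (p k))\<^sup>2)"

definition count_k :: "nat \<Rightarrow> (nat \<Rightarrow> nat) \<Rightarrow> nat \<Rightarrow> nat" where
  "count_k n x k = card {i\<in>{..<n}. x i = k}"

definition emp_dist :: "nat \<Rightarrow> (nat \<Rightarrow> nat) \<Rightarrow> nat \<Rightarrow> real" where
  "emp_dist n x k = real (count_k n x k) / real n"

text \<open>E[(Q(P) - Q(hat P_n))^2] for n i.i.d. samples from P: expectation over all
  sample sequences x : {0..<n} -> {1..S}, each with probability prod_i p(x_i).\<close>
definition mse_Q :: "nat \<Rightarrow> (nat \<Rightarrow> real) \<Rightarrow> nat \<Rightarrow> real" where
  "mse_Q S p n = (\<Sum>x\<in>{..<n} \<rightarrow>\<^sub>E {1..S}.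
      (\<Prod>i<n. p (x i)) * (Qfun S p - Qfun S (emp_dist n x))\<^sup>2)"

end

theory Submission
  imports Defs "HOL-Analysis.Analysis"
begin

lemma card_ind: "finite I \<Longrightarrow> real (card {i\<in>I. P i}) = (\<Sum>i\<in>I. if P i then 1 else 0)"
  by (simp add: sum.If_cases Int_def)

lemma E_prod: "finite (A::nat set) \<Longrightarrow> (\<Sum>x\<in>{..<(n::nat)} \<rightarrow>\<^sub>E A. \<Prod>i<n. f i (x i)) = (\<Prod>i<n. \<Sum>a\<in>A. (f i a :: real))"
  by (rule prod_sum_PiE[symmetric]) auto

lemma prod_sel: "finite I \<Longrightarrow> (\<Prod>i\<in>I. if i \<in> J then g (x i) * p (x i) else p (x i))
   = (\<Prod>i\<in>I\<inter>J. g (x i)) * (\<Prod>i\<in>I. (p (x i)::real))"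
proof -
  assume I: "finite I"
  have "(\<Prod>i\<in>I. if i\<in>J then g (x i) * p (x i) else p (x i)) = (\<Prod>i\<in>I. (if i\<in>J then g (x i) else 1) * p (x i))"
    by (rule prod.cong) auto
  also have "\<dots> = (\<Prod>i\<in>I. if i\<in>J then g (x i) else 1) * (\<Prod>i\<in>I. p (x i))" by (rule prod.distrib)
  also have "(\<Prod>i\<in>I. if i\<in>J then g (x i) else 1) = (\<Prod>i\<in>I\<inter>J. g (x i))"
    using prod.inter_restrict[OF I, symmetric] by simp
  finally show ?thesis .
qed

lemma E_sel:
  fixes p :: "nat \<Rightarrow> real"
  assumes A: "finite (A::nat set)" and k: "k \<in> A" and s: "(\<Sum>a\<in>A. p a) = 1" and J: "J \<subseteq> {..<(n::nat)}"
  shows "(\<Sum>x\<in>{..<n} \<rightarrow>\<^sub>E A. (\<Prod>i\<in>J. (if x i = k then 1 else 0)) * (\<Prod>i<n. p (x i))) = p k ^ card J"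
proof -
  define f where "f i a = (if i \<in> J then (if a = k then 1 else 0) * p a else p a)" for i a
  have "(\<Prod>i\<in>J. (if x i = k then 1 else 0)) * (\<Prod>i<n. p (x i)) = (\<Prod>i<n. f i (x i))" for x
    unfolding f_def using prod_sel[of "{..<n}" J "\<lambda>a. if a = k then 1 else 0" x p] J
    by (simp add: Int_absorb1)
  hence "(\<Sum>x\<in>{..<n} \<rightarrow>\<^sub>E A. (\<Prod>i\<in>J. (if x i = k then 1 else 0)) * (\<Prod>i<n. p (x i)))
      = (\<Prod>i<n. \<Sum>a\<in>A. f i a)" using E_prod[OF A] by simp
  also have "\<dots> = (\<Prod>i<n. if i \<in> J then p k else 1)"
  proof (rule prod.cong)
    fix i assume "i \<in> {..<n}"
    show "(\<Sum>a\<in>A. f i a) = (if i \<in> J then p k else 1)"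
      proof (cases "i \<in> J")
      case True
      have "(\<Sum>a\<in>A. (if a = k then 1 else 0) * p a) = (\<Sum>a\<in>A. if a = k then p a else 0)"
        by (rule sum.cong) auto
      also have "\<dots> = p k" using k A by simp
      finally show ?thesis using True by (simp add: f_def)
    qed (use s in \<open>simp add: f_def\<close>)
  qed simp
  also have "\<dots> = (\<Prod>i\<in>{..<n}\<inter>J. p k)" using prod.inter_restrict[of "{..<n}" "\<lambda>_. p k" J] by simp
  also have "(\<Prod>i\<in>{..<n}\<inter>J. p k) = p k ^ card J"
  proof -
    have "{..<n}\<inter>J = J" using J by blast
    thus ?thesis by simp
  qed
  finally show ?thesis .
qed

lemma f_lip:
  fixes a b m :: real
  assumes "1/m \<le> a" "a \<le> b" "b \<le> 1" "3 \<le> m"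
  shows "\<bar>b*(ln b)^2 - a*(ln a)^2\<bar> \<le> 3*(ln m)^2*(b-a)"
proof (cases "a = b")
  case True thus ?thesis by simp
next
  case False
  hence ab: "a < b" using assms by simp
  have a0: "a > 0" using assms by (smt (verit) divide_pos_pos)
  have "\<exists>z. a < z \<and> z < b \<and> (b*(ln b)^2 - a*(ln a)^2 = (b - a) * ((ln z)^2 + 2 * ln z))"
  proof (rule MVT2[OF ab])
    fix t assume t: "a \<le> t" "t \<le> b"
    hence "t > 0" using a0 by simp
    thus "DERIV (\<lambda>t. t*(ln t)^2) t :> (ln t)^2 + 2 * ln t"
      by (auto intro!: derivative_eq_intros simp: power2_eq_square field_simps)
  qed
  then obtain z where z: "a < z" "z < b" "b*(ln b)^2 - a*(ln a)^2 = (b - a) * ((ln z)^2 + 2 * ln z)" by blast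
  have z0: "z > 0" using z a0 by simp
  have u1: "ln z \<le> 0" using z assms z0 by simp
  have "ln z \<ge> ln (1/m)" using z assms z0 by (subst ln_le_cancel_iff) auto
  hence u2: "ln z \<ge> - ln m" using assms by (simp add: ln_div)
  have Lm: "ln m \<ge> 1"
  proof -
    have "exp 1 \<le> m" using exp_le assms by linarith
    hence "ln (exp 1) \<le> ln m" using assms by (subst ln_le_cancel_iff) auto
    thus ?thesis by simp
  qed
  have "\<bar>(ln z)^2 + 2 * ln z\<bar> \<le> 3*(ln m)^2"
  proof -
    have "(- ln z)^2 \<le> (ln m)^2" using u1 u2 by (intro power_mono) auto
    hence "(ln z)^2 \<le> (ln m)^2" by simp
    moreover have "ln m * 1 \<le> ln m * ln m" using Lm by (intro mult_left_mono) auto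
    hence "\<bar>2 * ln z\<bar> \<le> 2 * (ln m)^2" using u1 u2 by (simp add: power2_eq_square)
    ultimately show ?thesis by (smt (verit) zero_le_power2)
  qed
  hence "(b - a) * \<bar>(ln z)^2 + 2 * ln z\<bar> \<le> (b - a) * (3*(ln m)^2)" using ab by (intro mult_left_mono) auto
  thus ?thesis using z(3) ab by (simp add: abs_mult mult_ac)
qed

context
  fixes A :: "nat set" and p :: "nat \<Rightarrow> real" and k :: nat and n :: nat
  assumes A: "finite A" and k: "k \<in> A" and s: "(\<Sum>a\<in>A. p a) = 1"
begin

lemma E1: "(\<Sum>x\<in>{..<n} \<rightarrow>\<^sub>E A. (\<Prod>i<n. p (x i))) = 1"
  using E_sel[OF A k s, of "{}" n] by simp

lemma EI1: "j < n \<Longrightarrow> (\<Sum>x\<in>{..<n} \<rightarrow>\<^sub>E A. (if x j = k then 1 else 0) * (\<Prod>i<n. p (x i))) = p k"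
  using E_sel[OF A k s, of "{j}" n] by simp

lemma EI2: "j < n \<Longrightarrow> l < n \<Longrightarrow> j \<noteq> l \<Longrightarrow> (\<Sum>x\<in>{..<n} \<rightarrow>\<^sub>E A. ((if x j = k then 1 else 0) * (if x l = k then 1 else 0)) * (\<Prod>i<n. p (x i))) = p k ^ 2"
  using E_sel[OF A k s, of "{j,l}" n] by (simp add: power2_eq_square)

lemma cnt_eq: "real (count_k n x k) = (\<Sum>j<n. if x j = k then 1 else 0)"
  unfolding count_k_def by (rule card_ind) simp

lemma EN: "(\<Sum>x\<in>{..<n} \<rightarrow>\<^sub>E A. (\<Prod>i<n. p (x i)) * real (count_k n x k)) = real n * p k"
proof -
  have "(\<Sum>x\<in>{..<n} \<rightarrow>\<^sub>E A. (\<Prod>i<n. p (x i)) * real (count_k n x k))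
     = (\<Sum>x\<in>{..<n} \<rightarrow>\<^sub>E A. \<Sum>j<n. (if x j = k then 1 else 0) * (\<Prod>i<n. p (x i)))"
    by (simp add: cnt_eq sum_distrib_left sum_distrib_right mult.commute)
  also have "\<dots> = (\<Sum>j<n. \<Sum>x\<in>{..<n} \<rightarrow>\<^sub>E A. (if x j = k then 1 else 0) * (\<Prod>i<n. p (x i)))"
    by (rule sum.swap)
  also have "\<dots> = (\<Sum>j<n. p k)" by (rule sum.cong) (auto simp: EI1)
  finally show ?thesis by simp
qed

lemma EN2: "(\<Sum>x\<in>{..<n} \<rightarrow>\<^sub>E A. (\<Prod>i<n. p (x i)) * (real (count_k n x k))^2) = real n * p k + real n * (real n - 1) * p k ^ 2"
proof -
  have "(\<Sum>x\<in>{..<n} \<rightarrow>\<^sub>E A. (\<Prod>i<n. p (x i)) * (real (count_k n x k))^2)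
     = (\<Sum>x\<in>{..<n} \<rightarrow>\<^sub>E A. \<Sum>j<n. \<Sum>l<n. ((if x j = k then 1 else 0) * (if x l = k then 1 else 0)) * (\<Prod>i<n. p (x i)))"
    by (simp add: cnt_eq power2_eq_square sum_distrib_left sum_distrib_right mult_ac)
  also have "\<dots> = (\<Sum>j<n. \<Sum>l<n. \<Sum>x\<in>{..<n} \<rightarrow>\<^sub>E A. ((if x j = k then 1 else 0) * (if x l = k then 1 else 0)) * (\<Prod>i<n. p (x i)))"
    by (simp add: sum.swap[of _ "{..<n} \<rightarrow>\<^sub>E A"])
  also have "\<dots> = (\<Sum>j<n. \<Sum>l<n. if l = j then p k else p k ^ 2)"
  proof (intro sum.cong refl)
    fix j l assume "j \<in> {..<n}" "l \<in> {..<n}"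
    thus "(\<Sum>x\<in>{..<n} \<rightarrow>\<^sub>E A. ((if x j = k then 1 else 0) * (if x l = k then 1 else 0)) * (\<Prod>i<n. p (x i))) = (if l = j then p k else p k ^ 2)"
      using EI1[of j] EI2[of j l] by (cases "l = j") (auto simp: if_distrib cong: if_cong)
  qed
  also have "\<dots> = (\<Sum>j<n. p k + (real n - 1) * p k ^ 2)"
  proof (rule sum.cong[OF refl])
    fix j assume j: "j \<in> {..<n}"
    have "(\<Sum>l<n. if l = j then p k else p k ^ 2) = p k + (\<Sum>l\<in>{..<n}-{j}. if l = j then p k else p k ^ 2)"
      using j by (simp add: sum.remove)
    also have "(\<Sum>l\<in>{..<n}-{j}. if l = j then p k else p k ^ 2) = (\<Sum>l\<in>{..<n}-{j}. p k ^ 2)"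
      by (rule sum.cong) auto
    also have "\<dots> = (real n - 1) * p k ^ 2" using j by (simp add: of_nat_diff)
    finally show "(\<Sum>l<n. if l = j then p k else p k ^ 2) = p k + (real n - 1) * p k ^ 2" .
  qed
  finally show ?thesis by (simp add: algebra_simps)
qed

lemma EV: "n > 0 \<Longrightarrow> (\<Sum>x\<in>{..<n} \<rightarrow>\<^sub>E A. (\<Prod>i<n. p (x i)) * (real (count_k n x k) / real n - p k)^2) = p k * (1 - p k) / real n"
proof -
  assume n: "n > 0"
  define w where "w x = (\<Prod>i<n. p (x i))" for x :: "nat \<Rightarrow> nat"
  define N where "N x = real (count_k n x k)" for x
  have "(\<Sum>x\<in>{..<n} \<rightarrow>\<^sub>E A. w x * (N x / real n - p k)^2)
    = (\<Sum>x\<in>{..<n} \<rightarrow>\<^sub>E A. (w x * (N x)^2) / real n ^ 2 - (2 * p k / real n) * (w x * N x) + p k ^ 2 * w x)"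
    using n by (intro sum.cong) (auto simp: power2_eq_square field_simps)
  also have "\<dots> = (\<Sum>x\<in>{..<n} \<rightarrow>\<^sub>E A. w x * (N x)^2) / real n ^ 2 - (2 * p k / real n) * (\<Sum>x\<in>{..<n} \<rightarrow>\<^sub>E A. w x * N x) + p k ^ 2 * (\<Sum>x\<in>{..<n} \<rightarrow>\<^sub>E A. w x)"
    by (simp add: sum.distrib sum_subtractf sum_distrib_left sum_divide_distrib)
  also have "\<dots> = (real n * p k + real n * (real n - 1) * p k ^ 2) / real n ^ 2 - (2 * p k / real n) * (real n * p k) + p k ^ 2"
    using EN EN2 E1 unfolding w_def N_def by simp
  also have "\<dots> = p k * (1 - p k) / real n" using n by (simp add: field_simps power2_eq_square)
  finally show ?thesis unfolding w_def N_def .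
qed

lemma E0: "(\<Sum>x\<in>{..<n} \<rightarrow>\<^sub>E A. (\<Prod>i<n. p (x i)) * (if count_k n x k = 0 then 1 else 0)) = (1 - p k) ^ n"
proof -
  have eq: "(\<Prod>i<n. p (x i)) * (if count_k n x k = 0 then 1 else 0) = (\<Prod>i<n. p (x i) * (if x i = k then 0 else 1))" for x
  proof -
    have c: "count_k n x k = 0 \<longleftrightarrow> (\<forall>i<n. x i \<noteq> k)" unfolding count_k_def by auto
    have "(\<Prod>i<n. (if x i = k then 0 else 1::real)) = (if count_k n x k = 0 then 1 else 0)"
    proof (cases "\<forall>i<n. x i \<noteq> k")
      case True thus ?thesis using c by (simp add: prod.neutral)
    next
      case False
      then obtain i where "i < n" "x i = k" by auto
      thus ?thesis using c by (subst prod_zero) auto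
    qed
    thus ?thesis by (simp add: prod.distrib)
  qed
  have "(\<Sum>x\<in>{..<n} \<rightarrow>\<^sub>E A. (\<Prod>i<n. p (x i)) * (if count_k n x k = 0 then 1 else 0))
     = (\<Sum>x\<in>{..<n} \<rightarrow>\<^sub>E A. \<Prod>i<n. p (x i) * (if x i = k then 0 else 1))" by (simp add: eq)
  also have "\<dots> = (\<Prod>i<n. \<Sum>a\<in>A. p a * (if a = k then 0 else 1))" by (rule E_prod[OF A])
  also have "(\<Sum>a\<in>A. p a * (if a = k then 0 else 1)) = 1 - p k"
  proof -
    have "(\<Sum>a\<in>A. p a * (if a = k then 0 else 1)) = (\<Sum>a\<in>A. p a - (if a = k then p a else 0))"
      by (rule sum.cong) auto
    also have "\<dots> = 1 - p k" using A k s by (simp add: sum_subtractf)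
    finally show ?thesis .
  qed
  finally show ?thesis by simp
qed

lemma pointwise:
  assumes x: "x \<in> {..<n} \<rightarrow>\<^sub>E A" and pnn: "\<And>a. a \<in> A \<Longrightarrow> p a \<ge> 0"
    and n3: "real n \<ge> 3" and pk: "p k = 0 \<or> p k \<ge> 1 / real n" and pk1: "p k \<le> 1"
  shows "(\<Prod>i<n. p (x i)) * (p k * (ln (p k))\<^sup>2 - emp_dist n x k * (ln (emp_dist n x k))\<^sup>2)\<^sup>2
     \<le> (\<Prod>i<n. p (x i)) * (9 * (ln (real n))^4 * (real (count_k n x k) / real n - p k)^2
          + (p k * (ln (p k))\<^sup>2)\<^sup>2 * (if count_k n x k = 0 then 1 else 0))"
proof -
  define w where "w = (\<Prod>i<n. p (x i))"
  define e where "e = emp_dist n x k"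
  have w0: "w \<ge> 0" unfolding w_def using x pnn by (intro prod_nonneg) auto
  have Nle: "count_k n x k \<le> n" unfolding count_k_def
    using card_mono[of "{..<n}" "{i \<in> {..<n}. x i = k}"] by auto
  show ?thesis
  proof (cases "count_k n x k = 0")
    case True
    hence "e = 0" unfolding e_def emp_dist_def by simp
    thus ?thesis using True w0 unfolding w_def[symmetric] e_def[symmetric]
      by (simp add: mult_left_mono)
  next
    case False
    then obtain i where i: "i < n" "x i = k" unfolding count_k_def
      by (metis (mono_tags, lifting) card.empty empty_Collect_eq lessThan_iff)
    show ?thesis
    proof (cases "p k = 0")
      case True
      have "w = 0" unfolding w_def using i True by (intro prod_zero) auto
      thus ?thesis unfolding w_def[symmetric] by simp
    next
      case pk0: False
      hence pkn: "p k \<ge> 1 / real n" using pk by auto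
      have npos: "real n > 0" using n3 by simp
      have e1: "e \<ge> 1 / real n" unfolding e_def emp_dist_def using False npos
        by (simp add: divide_right_mono)
      have e2: "e \<le> 1" unfolding e_def emp_dist_def using Nle npos by simp
      have L: "\<bar>p k * (ln (p k))\<^sup>2 - e * (ln e)\<^sup>2\<bar> \<le> 3 * (ln (real n))\<^sup>2 * \<bar>e - p k\<bar>"
      proof (cases "e \<le> p k")
        case True
        thus ?thesis using f_lip[of "real n" e "p k"] e1 pk1 n3 by simp
      next
        case False
        thus ?thesis using f_lip[of "real n" "p k" e] pkn e2 n3 by (simp add: abs_minus_commute)
      qed
      have "(p k * (ln (p k))\<^sup>2 - e * (ln e)\<^sup>2)\<^sup>2 \<le> (3 * (ln (real n))\<^sup>2 * \<bar>e - p k\<bar>)\<^sup>2"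
        using L by (metis abs_ge_zero order_trans power2_abs power_mono)
      also have "\<dots> = 9 * (ln (real n))^4 * (e - p k)^2" by (simp add: power2_eq_square power4_eq_xxxx)
      finally have "w * (p k * (ln (p k))\<^sup>2 - e * (ln e)\<^sup>2)\<^sup>2 \<le> w * (9 * (ln (real n))^4 * (e - p k)^2)"
        using w0 by (rule mult_left_mono)
      thus ?thesis using False unfolding w_def[symmetric] e_def[symmetric] unfolding e_def emp_dist_def by simp
    qed
  qed
qed

lemma Ek:
  assumes pnn: "\<And>a. a \<in> A \<Longrightarrow> p a \<ge> 0"
    and n3: "real n \<ge> 3" and pk: "p k = 0 \<or> p k \<ge> 1 / real n" and pk1: "p k \<le> 1"
  shows "(\<Sum>x\<in>{..<n} \<rightarrow>\<^sub>E A. (\<Prod>i<n. p (x i)) * (p k * (ln (p k))\<^sup>2 - emp_dist n x k * (ln (emp_dist n x k))\<^sup>2)\<^sup>2)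
     \<le> 9 * (ln (real n))^4 * (p k * (1 - p k) / real n) + (p k * (ln (p k))\<^sup>2)\<^sup>2 * (1 - p k) ^ n"
proof -
  define a where "a = 9 * (ln (real n))^4"
  define c where "c = (p k * (ln (p k))\<^sup>2)\<^sup>2"
  have "(\<Sum>x\<in>{..<n} \<rightarrow>\<^sub>E A. (\<Prod>i<n. p (x i)) * (p k * (ln (p k))\<^sup>2 - emp_dist n x k * (ln (emp_dist n x k))\<^sup>2)\<^sup>2)
     \<le> (\<Sum>x\<in>{..<n} \<rightarrow>\<^sub>E A. (\<Prod>i<n. p (x i)) * (a * (real (count_k n x k) / real n - p k)^2
          + c * (if count_k n x k = 0 then 1 else 0)))"
    unfolding a_def c_def by (intro sum_mono pointwise[OF _ pnn n3 pk pk1])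
  also have "\<dots> = a * (\<Sum>x\<in>{..<n} \<rightarrow>\<^sub>E A. (\<Prod>i<n. p (x i)) * (real (count_k n x k) / real n - p k)^2)
      + c * (\<Sum>x\<in>{..<n} \<rightarrow>\<^sub>E A. (\<Prod>i<n. p (x i)) * (if count_k n x k = 0 then 1 else 0))"
    by (simp add: distrib_left sum.distrib sum_distrib_left mult_ac)
  also have "\<dots> = a * (p k * (1 - p k) / real n) + c * (1 - p k) ^ n"
    using EV E0 n3 by simp
  finally show ?thesis unfolding a_def c_def .
qed

end

lemma pow_bound:
  fixes q :: real
  assumes "0 \<le> q" "q \<le> 1" "n > 0"
  shows "q * (1 - q) ^ n \<le> 1 / real n"
proof -
  have "1 + real n * q \<le> (1 + q) ^ n" using assms by (intro Bernoulli_inequality) simp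
  hence "(1 - q) ^ n * (1 + real n * q) \<le> (1 - q) ^ n * (1 + q) ^ n"
    using assms by (intro mult_left_mono) auto
  also have "\<dots> = (1 - q^2) ^ n" by (simp add: power_mult_distrib[symmetric] power2_eq_square algebra_simps)
  also have "\<dots> \<le> 1" using assms by (intro power_le_one) (auto simp: power_le_one)
  finally have h: "(1 - q) ^ n * (1 + real n * q) \<le> 1" .
  have "0 \<le> (1 - q) ^ n" using assms by simp
  hence "(1 - q) ^ n * (real n * q) \<le> (1 - q) ^ n * (1 + real n * q)" by (intro mult_left_mono) auto
  hence "(1 - q) ^ n * (real n * q) \<le> 1" using h by linarith
  thus ?thesis using assms by (simp add: field_simps)
qed


lemma main_bound:
  fixes S :: nat and p :: "nat \<Rightarrow> real" and n :: nat
  assumes pnn: "\<And>k. k \<in> {1..S} \<Longrightarrow> p k \<ge> 0"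
    and s: "(\<Sum>k\<in>{1..S}. p k) = 1"
    and n3: "real n \<ge> 3" and pk: "\<forall>k\<in>{1..S}. p k = 0 \<or> p k \<ge> 1 / real n"
  shows "mse_Q S p n \<le> real S * (9 * real S + (\<Sum>k\<in>{1..S}. if p k = 0 then 0 else (p k * (ln (p k))\<^sup>2)\<^sup>2 / p k)) * ((ln (real n)) ^ 4 / real n)"
proof -
  define A where "A = {1..S}"
  define w where "w x = (\<Prod>i<n. p (x i))" for x :: "nat \<Rightarrow> nat"
  define d where "d x k = p k * (ln (p k))\<^sup>2 - emp_dist n x k * (ln (emp_dist n x k))\<^sup>2" for x k
  define c where "c k = (if p k = 0 then 0 else (p k * (ln (p k))\<^sup>2)\<^sup>2 / p k)" for k
  define L where "L = (ln (real n)) ^ 4"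
  have A: "finite A" by (simp add: A_def)
  have npos: "real n > 0" using n3 by simp
  have pk1: "p k \<le> 1" if "k \<in> A" for k
    using member_le_sum[of k A p] that pnn A s unfolding A_def by auto
  have w0: "w x \<ge> 0" if "x \<in> {..<n} \<rightarrow>\<^sub>E A" for x
    unfolding w_def
  proof (intro prod_nonneg)
    fix i assume "i \<in> {..<n}"
    hence "x i \<in> A" using that by (auto simp: PiE_iff)
    thus "0 \<le> p (x i)" using pnn unfolding A_def by auto
  qed
  have L1: "L \<ge> 1"
  proof -
    have "exp 1 \<le> real n" using exp_le n3 by linarith
    hence "ln (exp 1) \<le> ln (real n)" using npos by (subst ln_le_cancel_iff) auto
    hence "1 \<le> ln (real n)" by simp
    thus ?thesis unfolding L_def by (simp add: one_le_power)
  qed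
  have "mse_Q S p n = (\<Sum>x\<in>{..<n} \<rightarrow>\<^sub>E A. w x * (\<Sum>k\<in>A. d x k)\<^sup>2)"
    unfolding mse_Q_def Qfun_def w_def d_def A_def by (simp add: sum_subtractf)
  also have "\<dots> \<le> (\<Sum>x\<in>{..<n} \<rightarrow>\<^sub>E A. w x * ((\<Sum>k\<in>A. (d x k)\<^sup>2) * real S))"
  proof (rule sum_mono)
    fix x assume x: "x \<in> {..<n} \<rightarrow>\<^sub>E A"
    have "(\<Sum>k\<in>A. d x k)\<^sup>2 \<le> (\<Sum>k\<in>A. (d x k)\<^sup>2) * real (card A)" by (rule sum_squared_le_sum_of_squares)
    thus "w x * (\<Sum>k\<in>A. d x k)\<^sup>2 \<le> w x * ((\<Sum>k\<in>A. (d x k)\<^sup>2) * real S)"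
      using w0[OF x] unfolding A_def by (intro mult_left_mono) auto
  qed
  also have "\<dots> = real S * (\<Sum>k\<in>A. \<Sum>x\<in>{..<n} \<rightarrow>\<^sub>E A. w x * (d x k)\<^sup>2)"
    by (simp add: sum_distrib_left sum_distrib_right mult_ac sum.swap[of _ A])
  also have "\<dots> \<le> real S * (\<Sum>k\<in>A. 9 * L / real n + c k / real n)"
  proof (intro mult_left_mono sum_mono)
    fix k assume k: "k \<in> A"
    have sA: "(\<Sum>a\<in>A. p a) = 1" using s unfolding A_def .
    have "(\<Sum>x\<in>{..<n} \<rightarrow>\<^sub>E A. w x * (d x k)\<^sup>2) \<le> 9 * L * (p k * (1 - p k) / real n) + (p k * (ln (p k))\<^sup>2)\<^sup>2 * (1 - p k) ^ n"
      unfolding w_def d_def L_def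
      using Ek[OF A k sA _ n3 _ pk1[OF k]] pnn pk k unfolding A_def by auto
    also have "\<dots> \<le> 9 * L / real n + c k / real n"
    proof (rule add_mono)
      have "p k * (1 - p k) \<le> 1" using pnn[of k] pk1[OF k] k unfolding A_def
        by (smt (verit) mult_le_one)
      hence "p k * (1 - p k) / real n \<le> 1 / real n" using npos by (simp add: divide_right_mono)
      hence "9 * L * (p k * (1 - p k) / real n) \<le> 9 * L * (1 / real n)" using L1
        by (intro mult_left_mono) auto
      thus "9 * L * (p k * (1 - p k) / real n) \<le> 9 * L / real n" by simp
    next
      show "(p k * (ln (p k))\<^sup>2)\<^sup>2 * (1 - p k) ^ n \<le> c k / real n"
      proof (cases "p k = 0")
        case True thus ?thesis by (simp add: c_def)
      next
        case False
        hence ppos: "p k > 0" using pnn[of k] k unfolding A_def by auto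
        have "(p k * (ln (p k))\<^sup>2)\<^sup>2 * (1 - p k) ^ n = ((p k * (ln (p k))\<^sup>2)\<^sup>2 / p k) * (p k * (1 - p k) ^ n)"
          using ppos by (simp add: field_simps)
        also have "\<dots> \<le> ((p k * (ln (p k))\<^sup>2)\<^sup>2 / p k) * (1 / real n)"
          using pow_bound[of "p k" n] ppos pk1[OF k] npos by (intro mult_left_mono) auto
        finally show ?thesis using False by (simp add: c_def)
      qed
    qed
    finally show "(\<Sum>x\<in>{..<n} \<rightarrow>\<^sub>E A. w x * (d x k)\<^sup>2) \<le> 9 * L / real n + c k / real n" .
  qed simp
  also have "\<dots> = real S * (9 * real S * L + (\<Sum>k\<in>A. c k)) / real n"
    using npos by (simp add: sum.distrib A_def sum_divide_distrib[symmetric] field_simps)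
  also have "\<dots> \<le> real S * (9 * real S + (\<Sum>k\<in>A. c k)) * (L / real n)"
  proof -
    have c0: "(\<Sum>k\<in>A. c k) \<ge> 0" unfolding c_def using pnn unfolding A_def by (intro sum_nonneg) auto
    have "(\<Sum>k\<in>A. c k) * 1 \<le> (\<Sum>k\<in>A. c k) * L" using c0 L1 by (intro mult_left_mono) auto
    hence "9 * real S * L + (\<Sum>k\<in>A. c k) \<le> (9 * real S + (\<Sum>k\<in>A. c k)) * L"
      by (simp add: distrib_right)
    hence "real S * (9 * real S * L + (\<Sum>k\<in>A. c k)) \<le> real S * ((9 * real S + (\<Sum>k\<in>A. c k)) * L)"
      by (intro mult_left_mono) auto
    thus ?thesis using npos by (simp add: divide_right_mono mult_ac)
  qed
  finally show ?thesis unfolding A_def c_def L_def .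
qed


theorem mainTheorem5:
  fixes S :: nat and p :: "nat \<Rightarrow> real"
  assumes "S \<ge> 1"
    and "\<And>k. k \<in> {1..S} \<Longrightarrow> p k \<ge> 0"
    and "(\<Sum>k\<in>{1..S}. p k) = 1"
  shows "(\<lambda>n. mse_Q S p n) \<in> O(\<lambda>n. (ln (real n)) ^ 4 / real n)"
proof -
  define K where "K = real S * (9 * real S + (\<Sum>k\<in>{1..S}. if p k = 0 then 0 else (p k * (ln (p k))\<^sup>2)\<^sup>2 / p k))"
  have ev1: "eventually (\<lambda>n::nat. real n \<ge> 3) at_top"
    using eventually_ge_at_top[of "3::nat"] by (rule eventually_mono) simp
  have "\<forall>k\<in>{1..S}. eventually (\<lambda>n::nat. p k = 0 \<or> p k \<ge> 1 / real n) at_top"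
  proof
    fix k assume k: "k \<in> {1..S}"
    show "eventually (\<lambda>n::nat. p k = 0 \<or> p k \<ge> 1 / real n) at_top"
    proof (cases "p k = 0")
      case True thus ?thesis by simp
    next
      case False
      hence pp: "p k > 0" using assms(2)[OF k] by simp
      show ?thesis using eventually_ge_at_top[of "nat \<lceil>1 / p k\<rceil> + 1"]
      proof (rule eventually_mono)
        fix n :: nat assume n: "nat \<lceil>1 / p k\<rceil> + 1 \<le> n"
        hence "1 / p k \<le> real n" by linarith
        hence "1 / real n \<le> p k" using pp n by (simp add: field_simps)
        thus "p k = 0 \<or> p k \<ge> 1 / real n" by simp
      qed
    qed
  qed
  hence ev2: "eventually (\<lambda>n::nat. \<forall>k\<in>{1..S}. p k = 0 \<or> p k \<ge> 1 / real n) at_top"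
    by (intro eventually_ball_finite) auto
  show ?thesis
  proof (rule bigoI[where c = K])
    show "eventually (\<lambda>n. norm (mse_Q S p n) \<le> K * norm ((ln (real n)) ^ 4 / real n)) at_top"
      using ev1 ev2
    proof eventually_elim
      case (elim n)
      have m0: "mse_Q S p n \<ge> 0" unfolding mse_Q_def
      proof (intro sum_nonneg mult_nonneg_nonneg prod_nonneg)
        fix x i assume "x \<in> {..<n} \<rightarrow>\<^sub>E {1..S}" "i \<in> {..<n}"
        hence "x i \<in> {1..S}" by (auto simp: PiE_iff)
        thus "0 \<le> p (x i)" using assms(2) by blast
      qed simp
      have "mse_Q S p n \<le> K * ((ln (real n)) ^ 4 / real n)"
        unfolding K_def using main_bound[OF assms(2,3) elim(1) elim(2)] by simp
      thus ?case using m0 elim(1) by simp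
    qed
  qed
qed

end
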